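(* Let $N\geq 2$ and $k\geq 1$ be integers and let $|\psi_1\rangle,\dots,|\psi_N\rangle$ be linearly independent pure states, each with prior probability $1/N$. For each function $\sigma:\{1,\dots,k\}\to\{1,\dots,N\}$ let $|\psi_\sigma\rangle=|\psi_{\sigma(1)}\rangle\otimes\cdots\otimes|\psi_{\sigma(k)}\rangle$, with prior probability $1/N^k$. Let $p$ be the optimum probability of unambiguous discrimination among the states $|\psi_1\rangle,\dots,|\psi_N\rangle$, and $p_{N,k}$ the optimum probability of unambiguous discrimination among the $N^k$ states $|\psi_\sigma\rangle$. Then $p_{N,k}\geq p^k$.
   Context: Unambiguous discrimination of states $|\chi_1\rangle,\dots,|\chi_M\rangle$ with prior probabilities $\eta_1,\dots,\eta_M$: a POVM $\{E_1,\dots,E_M,E_?\}$ such that $\langle\chi_j|E_i|\chi_j\rangle=0$ for all $i\neq j$, with $E_?$ the inconclusive outcome. Its success probability is $\sum_i\eta_i\langle\chi_i|E_i|\chi_i\rangle$, and the optimum probability of unambiguous discrimination is the supremum of this over all such POVMs. *)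

theory Defs
  imports Complex_Main "HOL-Library.FuncSet"
begin

text \<open>Finite-dimensional Hilbert space with orthonormal basis indexed by a finite set I;
  vectors are functions I -> complex, operators are matrices I x I -> complex.\<close>

definition qform :: "'a set \<Rightarrow> ('a \<Rightarrow> 'a \<Rightarrow> complex) \<Rightarrow> ('a \<Rightarrow> complex) \<Rightarrow> complex" where
  "qform I E v = (\<Sum>i\<in>I. \<Sum>j\<in>I. cnj (v i) * E i j * v j)"

definition psd :: "'a set \<Rightarrow> ('a \<Rightarrow> 'a \<Rightarrow> complex) \<Rightarrow> bool" where
  "psd I E = (\<forall>v. qform I E v \<in> \<real> \<and> 0 \<le> Re (qform I E v))"

definition vnorm2 :: "'a set \<Rightarrow> ('a \<Rightarrow> complex) \<Rightarrow> real" where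
  "vnorm2 I v = (\<Sum>i\<in>I. (cmod (v i))\<^sup>2)"

definition lin_indep :: "'a set \<Rightarrow> 'm set \<Rightarrow> ('m \<Rightarrow> 'a \<Rightarrow> complex) \<Rightarrow> bool" where
  "lin_indep I M chi = (\<forall>c. (\<forall>x\<in>I. (\<Sum>m\<in>M. c m * chi m x) = 0) \<longrightarrow> (\<forall>m\<in>M. c m = 0))"

text \<open>POVM {E_m (m in M), E0} (E0 the inconclusive outcome) unambiguously discriminating chi.\<close>
definition unamb_povm :: "'a set \<Rightarrow> 'm set \<Rightarrow> ('m \<Rightarrow> 'a \<Rightarrow> complex)
    \<Rightarrow> ('m \<Rightarrow> 'a \<Rightarrow> 'a \<Rightarrow> complex) \<Rightarrow> ('a \<Rightarrow> 'a \<Rightarrow> complex) \<Rightarrow> bool" where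
  "unamb_povm I M chi E E0 =
     ((\<forall>m\<in>M. psd I (E m)) \<and> psd I E0 \<and>
      (\<forall>i\<in>I. \<forall>j\<in>I. (\<Sum>m\<in>M. E m i j) + E0 i j = (if i = j then 1 else 0)) \<and>
      (\<forall>m\<in>M. \<forall>m'\<in>M. m \<noteq> m' \<longrightarrow> qform I (E m) (chi m') = 0))"

definition success_prob :: "'a set \<Rightarrow> 'm set \<Rightarrow> ('m \<Rightarrow> real) \<Rightarrow> ('m \<Rightarrow> 'a \<Rightarrow> complex)
    \<Rightarrow> ('m \<Rightarrow> 'a \<Rightarrow> 'a \<Rightarrow> complex) \<Rightarrow> real" where
  "success_prob I M eta chi E = (\<Sum>m\<in>M. eta m * Re (qform I (E m) (chi m)))"

definition opt_unamb :: "'a set \<Rightarrow> 'm set \<Rightarrow> ('m \<Rightarrow> real) \<Rightarrow> ('m \<Rightarrow> 'a \<Rightarrow> complex) \<Rightarrow> real" where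
  "opt_unamb I M eta chi =
     Sup {success_prob I M eta chi E | E. \<exists>E0. unamb_povm I M chi E E0}"

text \<open>k-fold tensor product psi_sigma(1) x ... x psi_sigma(k); basis of the product space
  indexed by functions f : {1..k} -> I (extensional).\<close>
definition tensor_state :: "nat \<Rightarrow> (nat \<Rightarrow> 'a \<Rightarrow> complex) \<Rightarrow> (nat \<Rightarrow> nat) \<Rightarrow> (nat \<Rightarrow> 'a) \<Rightarrow> complex" where
  "tensor_state k psi sigma f = (\<Prod>j\<in>{1..k}. psi (sigma j) (f j))"

end

theory Submission
  imports Defs
begin

lemma qform_supp:
  assumes "finite J" "S \<subseteq> J" "\<forall>x\<in>J-S. v x = 0"
  shows "qform J A v = qform S A v"
proof -
  have "qform J A v = (\<Sum>i\<in>J. \<Sum>j\<in>S. cnj (v i) * A i j * v j)"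
    unfolding qform_def
    apply (rule sum.cong[OF refl])
    apply (rule sum.mono_neutral_right) using assms by auto
  also have "\<dots> = qform S A v"
    unfolding qform_def
    by (rule sum.mono_neutral_right) (use assms in auto)
  finally show ?thesis .
qed

lemma psd_diag:
  assumes "psd J A" "finite J" "i \<in> J"
  shows "A i i \<in> \<real> \<and> 0 \<le> Re (A i i)"
proof -
  define v where "v = (\<lambda>x. if x = i then 1 else 0 :: complex)"
  have "qform J A v = qform {i} A v"
    by (rule qform_supp) (use assms in \<open>auto simp: v_def\<close>)
  also have "\<dots> = A i i" by (simp add: qform_def v_def)
  finally show ?thesis using assms(1) unfolding psd_def by metis
qed

lemma psd_herm:
  assumes "psd J A" "finite J" "i \<in> J" "j \<in> J"
  shows "A j i = cnj (A i j)"
proof (cases "i = j")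
  case True
  then show ?thesis using psd_diag[OF assms(1-3)]
    by (simp add: Reals_cnj_iff)
next
  case False
  define v1 where "v1 = (\<lambda>x. if x = i then 1 else if x = j then 1 else 0 :: complex)"
  define v2 where "v2 = (\<lambda>x. if x = i then 1 else if x = j then \<i> else 0 :: complex)"
  have "qform J A v1 = qform {i,j} A v1"
    by (rule qform_supp) (use assms in \<open>auto simp: v1_def\<close>)
  also have "\<dots> = A i i + A i j + A j i + A j j" using False by (simp add: qform_def v1_def)
  finally have 1: "A i i + A i j + A j i + A j j \<in> \<real>" using assms(1) unfolding psd_def by metis
  have "qform J A v2 = qform {i,j} A v2"
    by (rule qform_supp) (use assms in \<open>auto simp: v2_def\<close>)
  also have "\<dots> = A i i + \<i> * A i j - \<i> * A j i + A j j" proof -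
    have ii: "\<And>x. - (\<i> * x * \<i>) = x" by (simp add: complex_eq_iff)
    show ?thesis using False by (simp add: qform_def v2_def ii)
  qed
  finally have 2: "A i i + \<i> * A i j - \<i> * A j i + A j j \<in> \<real>" using assms(1) unfolding psd_def by metis
  have d1: "A i i \<in> \<real>" "A j j \<in> \<real>" using psd_diag[OF assms(1,2,3)] psd_diag[OF assms(1,2,4)] by auto
  from 1 d1 have a: "Im (A i j) + Im (A j i) = 0" by (simp add: complex_is_Real_iff)
  from 2 d1 have b: "Re (A i j) - Re (A j i) = 0" by (simp add: complex_is_Real_iff)
  show ?thesis using a b by (simp add: complex_eq_iff)
qed

lemma psd_zero_pivot:
  assumes "psd J A" "finite J" "a \<in> J" "j \<in> J" "A a a = 0"
  shows "A a j = 0"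
proof (rule ccontr)
  assume z: "A a j \<noteq> 0"
  then have ne: "j \<noteq> a" using assms by auto
  define z where "z = A a j"
  define s where "s = (Re (A j j) + 1) / (2 * (cmod z)\<^sup>2)"
  define t where "t = - of_real s * z"
  define v where "v = (\<lambda>x. if x = a then t else if x = j then 1 else 0 :: complex)"
  have h: "A j a = cnj z" unfolding z_def by (rule psd_herm[OF assms(1,2,3,4)])
  have "qform J A v = qform {a,j} A v"
    by (rule qform_supp) (use assms in \<open>auto simp: v_def\<close>)
  also have "\<dots> = cnj t * z + cnj z * t + A j j"
    using ne assms(5) h by (simp add: qform_def v_def z_def)
  finally have q: "0 \<le> Re (cnj t * z + cnj z * t + A j j)"
    using assms(1) unfolding psd_def by metis
  have zpos: "(cmod z)\<^sup>2 > 0" using z z_def by simp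
  have zz: "cnj z * z = of_real ((cmod z)\<^sup>2)" by (simp only: complex_norm_square mult.commute)
  have "cnj t * z = - of_real s * (cnj z * z)"
    unfolding t_def by simp
  then have "Re (cnj t * z) = - s * (cmod z)\<^sup>2" unfolding zz by simp
  moreover have "cnj z * t = - of_real s * (cnj z * z)"
    unfolding t_def by simp
  then have "Re (cnj z * t) = - s * (cmod z)\<^sup>2" unfolding zz by simp
  moreover have "s * (cmod z)\<^sup>2 = (Re (A j j) + 1) / 2"
    unfolding s_def using zpos by (simp add: field_simps)
  ultimately show False using q by simp
qed

lemma dec_psd:
  assumes "finite R" "finite I" "\<forall>i\<in>I. \<forall>j\<in>I. A i j = (\<Sum>r\<in>R. w r i * cnj (w r j))"
  shows "psd I A"
  unfolding psd_def
proof
  fix v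
  define z where "z = (\<lambda>r. \<Sum>i\<in>I. cnj (v i) * w r i)"
  have "qform I A v = (\<Sum>i\<in>I. \<Sum>j\<in>I. \<Sum>r\<in>R. cnj (v i) * w r i * (cnj (w r j) * v j))"
    unfolding qform_def using assms(3)
    by (intro sum.cong refl) (simp add: sum_distrib_left sum_distrib_right algebra_simps)
  also have "\<dots> = (\<Sum>i\<in>I. \<Sum>r\<in>R. \<Sum>j\<in>I. cnj (v i) * w r i * (cnj (w r j) * v j))"
    by (rule sum.cong[OF refl], rule sum.swap)
  also have "\<dots> = (\<Sum>r\<in>R. \<Sum>i\<in>I. \<Sum>j\<in>I. cnj (v i) * w r i * (cnj (w r j) * v j))"
    by (rule sum.swap)
  also have "\<dots> = (\<Sum>r\<in>R. z r * cnj (z r))"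
    unfolding z_def cnj_sum sum_product by (simp add: ac_simps)
  also have "\<dots> = of_real (\<Sum>r\<in>R. (cmod (z r))\<^sup>2)"
    by (simp only: of_real_sum complex_norm_square)
  finally show "qform I A v \<in> \<real> \<and> 0 \<le> Re (qform I A v)"
    by (simp add: sum_nonneg)
qed

lemma schur_step:
  assumes P: "psd (insert a I) A" and fin: "finite I" and a: "a \<notin> I"
  shows "psd I (\<lambda>i j. A i j - A i a * A a j / A a a)"
  unfolding psd_def
proof
  fix v
  define \<alpha> where "\<alpha> = A a a"
  define s where "s = (\<Sum>j\<in>I. A a j * v j)"
  define t where "t = (\<Sum>i\<in>I. cnj (v i) * A i a)"
  define c where "c = - s / \<alpha>"
  define v' where "v' = (\<lambda>x. if x = a then c else v x)"
  define Q where "Q = (\<Sum>i\<in>I. \<Sum>j\<in>I. cnj (v i) * A i j * v j)"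
  have \<alpha>R: "cnj \<alpha> = \<alpha>" using psd_diag[OF P] fin unfolding \<alpha>_def by (simp add: Reals_cnj_iff)
  have vI: "\<And>x. x \<in> I \<Longrightarrow> v' x = v x" using a unfolding v'_def by auto
  have va: "v' a = c" unfolding v'_def by simp
  have inner: "\<And>i. (\<Sum>j\<in>insert a I. cnj (v' i) * A i j * v' j)
      = cnj (v' i) * A i a * c + (\<Sum>j\<in>I. cnj (v' i) * A i j * v j)"
    using fin a vI va by (simp add: sum.insert)
  have "qform (insert a I) A v' = cnj c * \<alpha> * c + (\<Sum>j\<in>I. cnj c * A a j * v j)
      + (\<Sum>i\<in>I. cnj (v i) * A i a * c + (\<Sum>j\<in>I. cnj (v i) * A i j * v j))"
    unfolding qform_def inner using fin a vI va
    by (simp add: sum.insert \<alpha>_def)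
  also have "\<dots> = cnj c * \<alpha> * c + cnj c * s + t * c + Q"
    unfolding s_def t_def Q_def
    by (simp add: sum.distrib sum_distrib_left sum_distrib_right mult.assoc)
  finally have e1: "qform (insert a I) A v' = cnj c * \<alpha> * c + cnj c * s + t * c + Q" .
  have "qform I (\<lambda>i j. A i j - A i a * A a j / A a a) v
      = Q - (\<Sum>i\<in>I. \<Sum>j\<in>I. cnj (v i) * A i a * (A a j * v j)) / \<alpha>"
    unfolding qform_def Q_def \<alpha>_def
    by (simp add: sum_subtractf sum_divide_distrib ring_distribs mult.assoc)
  also have "(\<Sum>i\<in>I. \<Sum>j\<in>I. cnj (v i) * A i a * (A a j * v j)) = t * s"
    unfolding t_def s_def by (simp add: sum_product)
  finally have e2: "qform I (\<lambda>i j. A i j - A i a * A a j / A a a) v = Q - t * s / \<alpha>" .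
  have e3: "cnj c * \<alpha> * c + cnj c * s + t * c = - (t * s / \<alpha>)"
  proof (cases "\<alpha> = 0")
    case True then show ?thesis by (simp add: c_def)
  next
    case False
    have cc: "cnj c = - cnj s / \<alpha>" unfolding c_def using \<alpha>R by simp
    show ?thesis unfolding cc unfolding c_def using False by (simp add: field_simps)
  qed
  have "qform I (\<lambda>i j. A i j - A i a * A a j / A a a) v = qform (insert a I) A v'"
    unfolding e1 e2 e3 by simp
  then show "qform I (\<lambda>i j. A i j - A i a * A a j / A a a) v \<in> \<real> \<and>
      0 \<le> Re (qform I (\<lambda>i j. A i j - A i a * A a j / A a a) v)"
    using P unfolding psd_def by metis
qed

lemma psd_chol:
  assumes "finite I" "psd I A"
  shows "\<exists>w. \<forall>i\<in>I. \<forall>j\<in>I. A i j = (\<Sum>r\<in>I. w r i * cnj (w r j))"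
  using assms
proof (induction I arbitrary: A rule: finite_induct)
  case empty
  show ?case by simp
next
  case (insert a I)
  define \<alpha> where "\<alpha> = A a a"
  have P: "psd (insert a I) A" using insert by simp
  have fI: "finite (insert a I)" using insert by simp
  have aI: "a \<in> insert a I" by simp
  have \<alpha>d: "\<alpha> \<in> \<real>" "0 \<le> Re \<alpha>" using psd_diag[OF P fI aI] unfolding \<alpha>_def by auto
  have \<alpha>r: "\<alpha> = of_real (Re \<alpha>)" using \<alpha>d by (simp add: complex_is_Real_iff complex_eq_iff)
  have herm: "\<And>i j. i \<in> insert a I \<Longrightarrow> j \<in> insert a I \<Longrightarrow> A j i = cnj (A i j)"
    by (rule psd_herm[OF P fI])
  obtain w' where w': "\<forall>i\<in>I. \<forall>j\<in>I. A i j - A i a * A a j / A a a = (\<Sum>r\<in>I. w' r i * cnj (w' r j))"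
    using insert.IH[OF schur_step[OF P insert(1,2)]] by blast
  define sq where "sq = sqrt (Re \<alpha>)"
  have sq2: "(of_real sq :: complex) * of_real sq = \<alpha>"
  proof -
    have s1: "sq * sq = Re \<alpha>" unfolding sq_def using \<alpha>d(2) by simp
    have "(of_real sq :: complex) * of_real sq = of_real (sq * sq)" by simp
    also have "\<dots> = of_real (Re \<alpha>)" using s1 by simp
    also have "\<dots> = \<alpha>" by (rule \<alpha>r[symmetric])
    finally show ?thesis .
  qed
  define w where "w = (\<lambda>r x. if r = a then A x a / of_real sq else if x = a then 0 else w' r x)"
  have key: "w a x * cnj (w a y) = A x a * A a y / \<alpha>" if "x \<in> insert a I" "y \<in> insert a I" for x y
  proof -
    have "w a x * cnj (w a y) = A x a * cnj (A y a) / (of_real sq * of_real sq)"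
      unfolding w_def by simp
    also have "cnj (A y a) = A a y" using herm[OF aI that(2)] by simp
    finally show ?thesis unfolding sq2 .
  qed
  have rest: "(\<Sum>r\<in>I. w r x * cnj (w r y)) = (if x = a \<or> y = a then 0 else A x y - A x a * A a y / \<alpha>)"
    if "x \<in> insert a I" "y \<in> insert a I" for x y
  proof (cases "x = a \<or> y = a")
    case True
    have "\<forall>r\<in>I. w r x * cnj (w r y) = 0" using True insert(2) unfolding w_def by auto
    then show ?thesis using True by (simp add: sum.neutral)
  next
    case False
    then have "x \<in> I" "y \<in> I" using that by auto
    then have "(\<Sum>r\<in>I. w r x * cnj (w r y)) = (\<Sum>r\<in>I. w' r x * cnj (w' r y))"
      using False insert(2) unfolding w_def by (intro sum.cong) auto
    then show ?thesis using w' \<open>x \<in> I\<close> \<open>y \<in> I\<close> False unfolding \<alpha>_def by simp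
  qed
  show ?case
  proof (intro exI ballI)
    fix i j assume i: "i \<in> insert a I" and j: "j \<in> insert a I"
    have "(\<Sum>r\<in>insert a I. w r i * cnj (w r j)) = w a i * cnj (w a j) + (\<Sum>r\<in>I. w r i * cnj (w r j))"
      using insert(1,2) by simp
    also have "\<dots> = A i a * A a j / \<alpha> + (if i = a \<or> j = a then 0 else A i j - A i a * A a j / \<alpha>)"
      using key[OF i j] rest[OF i j] by simp
    also have "\<dots> = A i j"
    proof (cases "\<alpha> = 0")
      case True
      have z1: "A a j = 0" using psd_zero_pivot[OF P fI aI j] True unfolding \<alpha>_def by simp
      have z2: "A i a = 0" using psd_zero_pivot[OF P fI aI i] True herm[OF aI i] unfolding \<alpha>_def by simp
      show ?thesis using True z1 z2 by (cases "i = a"; cases "j = a"; simp)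
    next
      case False
      then show ?thesis unfolding \<alpha>_def by (cases "i = a"; cases "j = a"; simp)
    qed
    finally show "A i j = (\<Sum>r\<in>insert a I. w r i * cnj (w r j))" by simp
  qed
qed

lemma sum_sum_PiE_prod:
  fixes h :: "'k \<Rightarrow> 'a \<Rightarrow> 'a \<Rightarrow> 'c::comm_semiring_1"
  assumes "finite K" "finite I"
  shows "(\<Sum>f\<in>PiE K (\<lambda>_. I). \<Sum>g\<in>PiE K (\<lambda>_. I). \<Prod>j\<in>K. h j (f j) (g j))
       = (\<Prod>j\<in>K. \<Sum>x\<in>I. \<Sum>y\<in>I. h j x y)"
proof -
  have "(\<Prod>j\<in>K. \<Sum>x\<in>I. \<Sum>y\<in>I. h j x y) = (\<Sum>f\<in>PiE K (\<lambda>_. I). \<Prod>j\<in>K. \<Sum>y\<in>I. h j (f j) y)"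
    by (rule prod_sum_PiE) (use assms in auto)
  also have "\<dots> = (\<Sum>f\<in>PiE K (\<lambda>_. I). \<Sum>g\<in>PiE K (\<lambda>_. I). \<Prod>j\<in>K. h j (f j) (g j))"
    by (rule sum.cong[OF refl], rule prod_sum_PiE) (use assms in auto)
  finally show ?thesis by simp
qed

lemma psd_tensor:
  assumes "finite K" "finite I" "\<forall>j\<in>K. psd I (A j)"
  shows "psd (PiE K (\<lambda>_. I)) (\<lambda>f g. \<Prod>j\<in>K. A j (f j) (g j))"
proof -
  have "\<forall>j\<in>K. \<exists>w. \<forall>x\<in>I. \<forall>y\<in>I. A j x y = (\<Sum>r\<in>I. w r x * cnj (w r y))"
    using psd_chol assms by blast
  then obtain W where W: "\<forall>j\<in>K. \<forall>x\<in>I. \<forall>y\<in>I. A j x y = (\<Sum>r\<in>I. W j r x * cnj (W j r y))"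
    by metis
  show ?thesis
  proof (rule dec_psd[where R = "PiE K (\<lambda>_. I)" and w = "\<lambda>\<rho> f. \<Prod>j\<in>K. W j (\<rho> j) (f j)"])
    show "finite (PiE K (\<lambda>_. I))" "finite (PiE K (\<lambda>_. I))" using assms by (simp_all add: finite_PiE)
    show "\<forall>f\<in>PiE K (\<lambda>_. I). \<forall>g\<in>PiE K (\<lambda>_. I). (\<Prod>j\<in>K. A j (f j) (g j)) =
       (\<Sum>\<rho>\<in>PiE K (\<lambda>_. I). (\<Prod>j\<in>K. W j (\<rho> j) (f j)) * cnj (\<Prod>j\<in>K. W j (\<rho> j) (g j)))"
    proof (intro ballI)
      fix f g assume f: "f \<in> PiE K (\<lambda>_. I)" and g: "g \<in> PiE K (\<lambda>_. I)"
      have "(\<Prod>j\<in>K. A j (f j) (g j)) = (\<Prod>j\<in>K. \<Sum>r\<in>I. W j r (f j) * cnj (W j r (g j)))"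
        using W f g by (intro prod.cong refl) (auto simp: PiE_iff)
      also have "\<dots> = (\<Sum>\<rho>\<in>PiE K (\<lambda>_. I). \<Prod>j\<in>K. W j (\<rho> j) (f j) * cnj (W j (\<rho> j) (g j)))"
        by (rule prod_sum_PiE) (use assms in auto)
      also have "\<dots> = (\<Sum>\<rho>\<in>PiE K (\<lambda>_. I). (\<Prod>j\<in>K. W j (\<rho> j) (f j)) * cnj (\<Prod>j\<in>K. W j (\<rho> j) (g j)))"
        by (simp add: prod.distrib)
      finally show "(\<Prod>j\<in>K. A j (f j) (g j)) =
       (\<Sum>\<rho>\<in>PiE K (\<lambda>_. I). (\<Prod>j\<in>K. W j (\<rho> j) (f j)) * cnj (\<Prod>j\<in>K. W j (\<rho> j) (g j)))" .
    qed
  qed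
qed

lemma qform_sum_op:
  "qform I (\<lambda>i j. \<Sum>s\<in>S. B s i j) v = (\<Sum>s\<in>S. qform I (B s) v)"
  unfolding qform_def
  by (simp add: sum_distrib_left sum_distrib_right sum.swap[of _ S])

lemma psd_sum:
  assumes "\<forall>s\<in>S. psd I (B s)"
  shows "psd I (\<lambda>i j. \<Sum>s\<in>S. B s i j)"
  unfolding psd_def qform_sum_op
proof
  fix v
  have "\<forall>s\<in>S. qform I (B s) v \<in> \<real> \<and> 0 \<le> Re (qform I (B s) v)" using assms unfolding psd_def by blast
  then show "(\<Sum>s\<in>S. qform I (B s) v) \<in> \<real> \<and> 0 \<le> Re (\<Sum>s\<in>S. qform I (B s) v)"
    by (simp add: sum_in_Reals Re_sum sum_nonneg)
qed

lemma qform_id: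
  assumes "finite I" shows "qform I (\<lambda>i j. if i = j then 1 else 0) v = of_real (vnorm2 I v)"
proof -
  have "qform I (\<lambda>i j. if i = j then 1 else 0) v = (\<Sum>i\<in>I. cnj (v i) * v i)"
    unfolding qform_def
    by (intro sum.cong refl) (simp add: if_distrib if_distribR sum.delta' assms cong: if_cong)
  also have "\<dots> = of_real (vnorm2 I v)"
    unfolding vnorm2_def of_real_sum by (simp only: complex_norm_square mult.commute)
  finally show ?thesis .
qed

lemma psd_id: "finite I \<Longrightarrow> psd I (\<lambda>i j. if i = j then 1 else 0)"
  unfolding psd_def qform_id vnorm2_def by (simp add: sum_nonneg)

lemma psd_zero: "psd I (\<lambda>i j. 0)"
  unfolding psd_def qform_def by simp

lemma qform_cong:
  assumes "\<forall>i\<in>I. \<forall>j\<in>I. A i j = B i j"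
  shows "qform I A v = qform I B v"
  unfolding qform_def using assms by simp

lemma povm_le:
  assumes U: "unamb_povm I M chi E E0" and m: "m \<in> M" and fM: "finite M" and fI: "finite I"
  shows "Re (qform I (E m) v) \<le> vnorm2 I v"
proof -
  have "qform I (\<lambda>i j. (\<Sum>m\<in>M. E m i j) + E0 i j) v = qform I (\<lambda>i j. if i = j then 1 else 0) v"
    by (rule qform_cong) (use U in \<open>simp add: unamb_povm_def\<close>)
  moreover have "qform I (\<lambda>i j. (\<Sum>m\<in>M. E m i j) + E0 i j) v
     = (\<Sum>m\<in>M. qform I (E m) v) + qform I E0 v"
    unfolding qform_sum_op[symmetric] unfolding qform_def
    by (simp add: ring_distribs sum.distrib)
  ultimately have e: "(\<Sum>m\<in>M. Re (qform I (E m) v)) + Re (qform I E0 v) = vnorm2 I v"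
    unfolding qform_id[OF fI] by (metis Re_sum plus_complex.sel(1) Re_complex_of_real)
  have nn: "\<forall>m\<in>M. 0 \<le> Re (qform I (E m) v)" "0 \<le> Re (qform I E0 v)"
    using U unfolding unamb_povm_def psd_def by auto
  have "Re (qform I (E m) v) \<le> (\<Sum>m\<in>M. Re (qform I (E m) v))"
    by (rule member_le_sum) (use nn m fM in auto)
  then show ?thesis using e nn by linarith
qed

lemma success_bounds:
  assumes U: "unamb_povm I M chi E E0" and fM: "finite M" and fI: "finite I" and eta: "\<forall>m\<in>M. 0 \<le> eta m"
  shows "0 \<le> success_prob I M eta chi E"
    "success_prob I M eta chi E \<le> (\<Sum>m\<in>M. eta m * vnorm2 I (chi m))"
proof -
  have nn: "\<forall>m\<in>M. 0 \<le> Re (qform I (E m) (chi m))"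
    using U unfolding unamb_povm_def psd_def by auto
  show "0 \<le> success_prob I M eta chi E"
    unfolding success_prob_def using nn eta by (simp add: sum_nonneg)
  show "success_prob I M eta chi E \<le> (\<Sum>m\<in>M. eta m * vnorm2 I (chi m))"
    unfolding success_prob_def
    by (rule sum_mono, rule mult_left_mono) (use povm_le[OF U _ fM fI] eta in auto)
qed

lemma qform_tensor:
  assumes "finite K" "finite I"
  shows "qform (PiE K (\<lambda>_. I)) (\<lambda>f g. \<Prod>j\<in>K. A j (f j) (g j)) (\<lambda>f. \<Prod>j\<in>K. u j (f j))
     = (\<Prod>j\<in>K. qform I (A j) (u j))"
  unfolding qform_def
  by (simp add: prod.distrib[symmetric] sum_sum_PiE_prod[OF assms, of "\<lambda>j x y. cnj (u j x) * A j x y * u j y"])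

lemma Re_prod_Reals:
  assumes "\<forall>j\<in>K. z j \<in> \<real>"
  shows "Re (\<Prod>j\<in>K. z j) = (\<Prod>j\<in>K. Re (z j))"
proof -
  have "(\<Prod>j\<in>K. z j) = (\<Prod>j\<in>K. of_real (Re (z j)))"
    using assms by (intro prod.cong refl) (simp add: complex_is_Real_iff complex_eq_iff)
  then show ?thesis by (metis Re_complex_of_real of_real_prod)
qed

lemma product_povm:
  fixes psi :: "nat \<Rightarrow> 'i::finite \<Rightarrow> complex"
  assumes U: "unamb_povm UNIV {1..N} psi E E0"
  shows "unamb_povm (PiE {1..k} (\<lambda>_. UNIV::'i set)) (PiE {1..k} (\<lambda>_. {1..N})) (tensor_state k psi)
     (\<lambda>\<sigma> f g. \<Prod>j\<in>{1..k}. E (\<sigma> j) (f j) (g j))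
     (\<lambda>f g. \<Sum>\<tau>\<in>PiE {1..k} (\<lambda>_. {0..N}) - PiE {1..k} (\<lambda>_. {1..N}).
         \<Prod>j\<in>{1..k}. (if \<tau> j = 0 then E0 else E (\<tau> j)) (f j) (g j))"
proof -
  let ?K = "{1..k}"
  let ?IP = "PiE ?K (\<lambda>_. UNIV::'i set)"
  let ?MP = "PiE ?K (\<lambda>_. {1..N})"
  let ?T = "PiE ?K (\<lambda>_. {0..N})"
  define Eh where "Eh = (\<lambda>n. if n = 0 then E0 else E n)"
  have psdE: "\<forall>m\<in>{1..N}. psd UNIV (E m)" and psdE0: "psd UNIV E0"
    and compl: "\<forall>i j. (\<Sum>m\<in>{1..N}. E m i j) + E0 i j = (if i = j then 1 else 0)"
    and una: "\<forall>m\<in>{1..N}. \<forall>m'\<in>{1..N}. m \<noteq> m' \<longrightarrow> qform UNIV (E m) (psi m') = 0"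
    using U unfolding unamb_povm_def by auto
  have psdEh: "\<forall>n\<in>{0..N}. psd UNIV (Eh n)" using psdE psdE0 unfolding Eh_def by auto
  have fT: "finite ?T" by (simp add: finite_PiE)
  have sub: "?MP \<subseteq> ?T" by (auto simp: PiE_iff)
  have A: "\<forall>\<sigma>\<in>?MP. psd ?IP (\<lambda>f g. \<Prod>j\<in>?K. E (\<sigma> j) (f j) (g j))"
  proof
    fix \<sigma> assume "\<sigma> \<in> ?MP"
    then show "psd ?IP (\<lambda>f g. \<Prod>j\<in>?K. E (\<sigma> j) (f j) (g j))"
      using psdE by (intro psd_tensor) (auto simp: PiE_iff)
  qed
  have B: "psd ?IP (\<lambda>f g. \<Sum>\<tau>\<in>?T - ?MP. \<Prod>j\<in>?K. Eh (\<tau> j) (f j) (g j))"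
  proof (rule psd_sum, rule ballI)
    fix \<tau> assume "\<tau> \<in> ?T - ?MP"
    then show "psd ?IP (\<lambda>f g. \<Prod>j\<in>?K. Eh (\<tau> j) (f j) (g j))"
      using psdEh by (intro psd_tensor) (auto simp: PiE_iff)
  qed
  have C: "(\<Sum>\<sigma>\<in>?MP. \<Prod>j\<in>?K. E (\<sigma> j) (f j) (g j)) + (\<Sum>\<tau>\<in>?T - ?MP. \<Prod>j\<in>?K. Eh (\<tau> j) (f j) (g j))
      = (if f = g then 1 else 0)" if f: "f \<in> ?IP" and g: "g \<in> ?IP" for f g
  proof -
    have "(\<Sum>\<sigma>\<in>?MP. \<Prod>j\<in>?K. E (\<sigma> j) (f j) (g j)) = (\<Sum>\<sigma>\<in>?MP. \<Prod>j\<in>?K. Eh (\<sigma> j) (f j) (g j))"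
      unfolding Eh_def by (intro sum.cong refl prod.cong) (force simp: PiE_iff)+
    then have "(\<Sum>\<sigma>\<in>?MP. \<Prod>j\<in>?K. E (\<sigma> j) (f j) (g j)) + (\<Sum>\<tau>\<in>?T - ?MP. \<Prod>j\<in>?K. Eh (\<tau> j) (f j) (g j))
       = (\<Sum>\<tau>\<in>?T. \<Prod>j\<in>?K. Eh (\<tau> j) (f j) (g j))"
      using sum.subset_diff[OF sub fT, of "\<lambda>\<tau>. \<Prod>j\<in>?K. Eh (\<tau> j) (f j) (g j)"] by simp
    also have "\<dots> = (\<Prod>j\<in>?K. \<Sum>n\<in>{0..N}. Eh n (f j) (g j))"
      by (rule prod_sum_PiE[symmetric]) auto
    also have "\<dots> = (\<Prod>j\<in>?K. if f j = g j then 1 else 0)"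
    proof (rule prod.cong[OF refl])
      fix j
      have "{0..N} = insert 0 {1..N}" by auto
      then have "(\<Sum>n\<in>{0..N}. Eh n (f j) (g j)) = E0 (f j) (g j) + (\<Sum>n\<in>{1..N}. E n (f j) (g j))"
        unfolding Eh_def by simp
      then show "(\<Sum>n\<in>{0..N}. Eh n (f j) (g j)) = (if f j = g j then 1 else 0)"
        using compl by (simp add: add.commute)
    qed
    also have "\<dots> = (if f = g then 1 else 0)"
    proof (cases "f = g")
      case True then show ?thesis by simp
    next
      case False
      then obtain j where "j \<in> ?K" "f j \<noteq> g j" using PiE_ext[OF f g] by blast
      then show ?thesis using False by (simp add: prod_zero_iff) (metis atLeastAtMost_iff)
    qed
    finally show ?thesis .
  qed
  have D: "qform ?IP (\<lambda>f g. \<Prod>j\<in>?K. E (\<sigma> j) (f j) (g j)) (tensor_state k psi \<sigma>') = 0"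
    if s: "\<sigma> \<in> ?MP" and s': "\<sigma>' \<in> ?MP" and ne: "\<sigma> \<noteq> \<sigma>'" for \<sigma> \<sigma>'
  proof -
    obtain j where j: "j \<in> ?K" "\<sigma> j \<noteq> \<sigma>' j" using PiE_ext[OF s s'] ne by blast
    have te: "tensor_state k psi \<sigma>' = (\<lambda>f. \<Prod>j\<in>?K. psi (\<sigma>' j) (f j))"
      unfolding tensor_state_def by (rule ext) simp
    have "qform ?IP (\<lambda>f g. \<Prod>j\<in>?K. E (\<sigma> j) (f j) (g j)) (tensor_state k psi \<sigma>')
       = (\<Prod>j\<in>?K. qform UNIV (E (\<sigma> j)) (psi (\<sigma>' j)))"
      unfolding te by (rule qform_tensor) auto
    also have "\<dots> = 0"
    proof (rule prod_zero)
      have "\<sigma> j \<in> {1..N}" "\<sigma>' j \<in> {1..N}" using PiE_mem[OF s j(1)] PiE_mem[OF s' j(1)] by auto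
      then have "qform UNIV (E (\<sigma> j)) (psi (\<sigma>' j)) = 0" using una j(2) by blast
      then show "\<exists>a\<in>?K. qform UNIV (E (\<sigma> a)) (psi (\<sigma>' a)) = 0" using j(1) by blast
    qed simp
    finally show ?thesis .
  qed
  show ?thesis
    unfolding unamb_povm_def
  proof (intro conjI)
    show "psd ?IP (\<lambda>f g. \<Sum>\<tau>\<in>?T - ?MP. \<Prod>j\<in>?K. (if \<tau> j = 0 then E0 else E (\<tau> j)) (f j) (g j))"
      using B unfolding Eh_def .
    show "\<forall>i\<in>?IP. \<forall>j\<in>?IP. (\<Sum>\<sigma>\<in>?MP. \<Prod>ja\<in>?K. E (\<sigma> ja) (i ja) (j ja)) +
        (\<Sum>\<tau>\<in>?T - ?MP. \<Prod>ja\<in>?K. (if \<tau> ja = 0 then E0 else E (\<tau> ja)) (i ja) (j ja)) = (if i = j then 1 else 0)"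
      using C unfolding Eh_def by blast
  qed (use A D in blast)+
qed

lemma product_success:
  fixes psi :: "nat \<Rightarrow> 'i::finite \<Rightarrow> complex"
  assumes U: "unamb_povm UNIV {1..N} psi E E0"
  shows "success_prob (PiE {1..k} (\<lambda>_. UNIV::'i set)) (PiE {1..k} (\<lambda>_. {1..N})) (\<lambda>_. 1 / real N ^ k)
      (tensor_state k psi) (\<lambda>\<sigma> f g. \<Prod>j\<in>{1..k}. E (\<sigma> j) (f j) (g j))
    = (success_prob UNIV {1..N} (\<lambda>_. 1 / real N) psi E) ^ k"
proof -
  let ?K = "{1..k}"
  let ?IP = "PiE ?K (\<lambda>_. UNIV::'i set)"
  let ?MP = "PiE ?K (\<lambda>_. {1..N})"
  define q where "q = (\<lambda>n. qform UNIV (E n) (psi n))"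
  have qR: "\<forall>n\<in>{1..N}. q n \<in> \<real>" using U unfolding unamb_povm_def psd_def q_def by auto
  have t: "Re (qform ?IP (\<lambda>f g. \<Prod>j\<in>?K. E (\<sigma> j) (f j) (g j)) (tensor_state k psi \<sigma>))
      = (\<Prod>j\<in>?K. Re (q (\<sigma> j)))" if s: "\<sigma> \<in> ?MP" for \<sigma>
  proof -
    have te: "tensor_state k psi \<sigma> = (\<lambda>f. \<Prod>j\<in>?K. psi (\<sigma> j) (f j))"
      unfolding tensor_state_def by (rule ext) simp
    have "qform ?IP (\<lambda>f g. \<Prod>j\<in>?K. E (\<sigma> j) (f j) (g j)) (tensor_state k psi \<sigma>)
       = (\<Prod>j\<in>?K. q (\<sigma> j))"
      unfolding te q_def by (rule qform_tensor) auto
    moreover have "\<forall>j\<in>?K. q (\<sigma> j) \<in> \<real>" using qR PiE_mem[OF s] by blast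
    ultimately show ?thesis using Re_prod_Reals[of ?K "\<lambda>j. q (\<sigma> j)"] by simp
  qed
  have "success_prob ?IP ?MP (\<lambda>_. 1 / real N ^ k) (tensor_state k psi) (\<lambda>\<sigma> f g. \<Prod>j\<in>?K. E (\<sigma> j) (f j) (g j))
     = (\<Sum>\<sigma>\<in>?MP. 1 / real N ^ k * (\<Prod>j\<in>?K. Re (q (\<sigma> j))))"
    unfolding success_prob_def by (intro sum.cong refl) (simp only: t)
  also have "\<dots> = (\<Sum>\<sigma>\<in>?MP. \<Prod>j\<in>?K. 1 / real N * Re (q (\<sigma> j)))"
    by (intro sum.cong refl) (simp add: prod_dividef)
  also have "\<dots> = (\<Prod>j\<in>?K. \<Sum>n\<in>{1..N}. 1 / real N * Re (q n))"
    by (rule prod_sum_PiE[symmetric]) auto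
  also have "\<dots> = (success_prob UNIV {1..N} (\<lambda>_. 1 / real N) psi E) ^ k"
    unfolding success_prob_def q_def by simp
  finally show ?thesis .
qed

theorem lemma1:
  fixes N k :: nat and psi :: "nat \<Rightarrow> 'i::finite \<Rightarrow> complex"
  assumes "N \<ge> 2" and "k \<ge> 1"
    and "\<forall>n\<in>{1..N}. vnorm2 UNIV (psi n) = 1"
    and "lin_indep UNIV {1..N} psi"
  shows "opt_unamb (PiE {1..k} (\<lambda>_. (UNIV :: 'i set))) (PiE {1..k} (\<lambda>_. {1..N}))
           (\<lambda>_. 1 / real N ^ k) (tensor_state k psi)
         \<ge> (opt_unamb UNIV {1..N} (\<lambda>_. 1 / real N) psi) ^ k"
proof -
  let ?IP = "PiE {1..k} (\<lambda>_. (UNIV :: 'i set))"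
  let ?MP = "PiE {1..k} (\<lambda>_. {1..N})"
  define S1 where "S1 = {success_prob UNIV {1..N} (\<lambda>_. 1 / real N) psi E | E. \<exists>E0. unamb_povm UNIV {1..N} psi E E0}"
  define SP where "SP = {success_prob ?IP ?MP (\<lambda>_. 1 / real N ^ k) (tensor_state k psi) E | E.
      \<exists>E0. unamb_povm ?IP ?MP (tensor_state k psi) E E0}"
  have kpos: "0 < k" using assms(2) by simp
  have fIP: "finite ?IP" and fMP: "finite ?MP" by (simp_all add: finite_PiE)
  have bddP: "bdd_above SP"
  proof (rule bdd_aboveI)
    fix x assume "x \<in> SP"
    then obtain E E0 where U: "unamb_povm ?IP ?MP (tensor_state k psi) E E0"
      and x: "x = success_prob ?IP ?MP (\<lambda>_. 1 / real N ^ k) (tensor_state k psi) E"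
      unfolding SP_def by blast
    show "x \<le> (\<Sum>m\<in>?MP. 1 / real N ^ k * vnorm2 ?IP (tensor_state k psi m))"
      unfolding x by (rule success_bounds(2)[OF U fMP fIP]) simp
  qed
  have pow: "s ^ k \<in> SP \<and> 0 \<le> s" if "s \<in> S1" for s
  proof -
    obtain E E0 where U: "unamb_povm UNIV {1..N} psi E E0"
      and x: "s = success_prob UNIV {1..N} (\<lambda>_. 1 / real N) psi E"
      using \<open>s \<in> S1\<close> unfolding S1_def by blast
    have "s ^ k = success_prob ?IP ?MP (\<lambda>_. 1 / real N ^ k) (tensor_state k psi)
        (\<lambda>\<sigma> f g. \<Prod>j\<in>{1..k}. E (\<sigma> j) (f j) (g j))"
      unfolding x by (rule product_success[OF U, symmetric])
    then have "s ^ k \<in> SP" unfolding SP_def using product_povm[OF U, of k] by blast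
    moreover have "0 \<le> s" unfolding x by (rule success_bounds(1)[OF U]) auto
    ultimately show ?thesis by simp
  qed
  have s0: "success_prob UNIV {1..N} (\<lambda>_. 1 / real N) psi (\<lambda>_ _ _. 0) \<in> S1"
  proof -
    have "unamb_povm UNIV {1..N} psi (\<lambda>_ _ _. 0) (\<lambda>i j. if i = j then 1 else 0)"
      unfolding unamb_povm_def using psd_zero[of "UNIV :: 'i set"] psd_id[of "UNIV :: 'i set"]
      by (simp add: qform_def)
    then show ?thesis unfolding S1_def by blast
  qed
  define P where "P = Sup SP"
  have le: "s \<le> root k P" if "s \<in> S1" for s
  proof -
    have "s ^ k \<le> P" unfolding P_def using pow[OF that] bddP by (simp add: cSup_upper)
    then have "root k (s ^ k) \<le> root k P" using kpos by (simp add: real_root_le_mono)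
    then show ?thesis using pow[OF that] kpos by (simp add: real_root_power_cancel)
  qed
  have P0: "0 \<le> P"
  proof -
    obtain s where "s \<in> S1" using s0 by blast
    then have "0 \<le> s ^ k" "s ^ k \<le> P" unfolding P_def using pow bddP by (auto simp: cSup_upper)
    then show ?thesis by linarith
  qed
  have ne: "S1 \<noteq> {}" using s0 by blast
  have sup1: "Sup S1 \<le> root k P" using ne le by (rule cSup_least) 
  have bdd1: "bdd_above S1" by (rule bdd_aboveI[of _ "root k P"]) (rule le)
  have sup0: "0 \<le> Sup S1" using s0 pow[OF s0] cSup_upper[OF s0 bdd1] by linarith
  have "(Sup S1) ^ k \<le> (root k P) ^ k" using sup1 sup0 by (rule power_mono)
  also have "\<dots> = P" using kpos P0 by (simp add: real_root_pow_pos2)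
  finally show ?thesis unfolding opt_unamb_def P_def S1_def SP_def .
qed

end
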